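(* Let $G=(\mathcal V,\mathcal E)$ be an ADT network, possibly containing cycles, in which every link has unit delay. Let $A(D)$, $B(D)$ and $F$ be the encoding, decoding and adjacency matrices, where the entries $\alpha_{(i,e_j)}(D)$ and $\epsilon_{(e_i,(T_j,k))}(D)$ are constants or rational functions of $D$. Then the system matrix $M(D)$ relating the source power series to the destination power series, $\mathcal Z(D)=\mathcal X(S,D)M(D)$, is given by $$M(D)=A(D)\,(I-DF)^{-1}\,B(D)^T .$$
   Context: ADT network with delay. Supernodes $V$ have input ports $I(V)$ and output ports $O(V)$. Edges go from output ports to input ports of other supernodes, and the directed graph may have cycles. Symbols lie in a finite field $\mathbb F_q$ and time is $t=0,1,2,\dots$. Each link has the same unit delay. Processes are written as power series in the delay variable $D$: $$X(S,i,D)=\sum_t X_t(S,i)D^t,\qquad Z(T,k,D)=\sum_t Z_t(T,k)D^t,\qquad Y(e,D)=\sum_tY_t(e)D^t.$$ The network evolves as $$Y_{t+1}(e)=\sum_{e'\in I(V)}\beta_{(e',e)}Y_t(e')+\sum_i\alpha_{(i,e)}X_t(S,i)\quad\text{for } e\in O(V),$$ where the source term is present only at the source $S$. Input ports receive the $\mathbb F_q$-sum of the symbols on incoming edges, and an output port sends the same symbol on all its outgoing edges. Destinations output $$Z_{t+1}(T,k)=\sum_{e'\in I(T)}\epsilon_{(e',(T,k))}Y_t(e').$$ Index the ports $e_1,\dots,e_m$. - $F$ is the $m\times m$ matrix with $F_{i,j}=1$ if $(e_i,e_j)\in\mathcal E$, $F_{i,j}=\beta_{(e_i,e_j)}$ if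 $e_i\in I(V)$ and $e_j\in O(V)$ for the same supernode $V$, and $F_{i,j}=0$ otherwise. - $A(D)_{i,j}=\alpha_{(i,e_j)}(D)$ if $e_j\in O(S)$, and $0$ otherwise. - $B(D)$ has rows indexed by the destination outputs $(T_j,k)$, with entry $\epsilon_{(e_i,(T_j,k))}(D)$ in column $e_i$ if $e_i\in I(T_j)$, and $0$ otherwise. Matrices are taken over the field $\mathbb F_q(D)$ of rational functions. *)

theory Defs
  imports "HOL-Analysis.Analysis" "HOL-Computational_Algebra.Formal_Laurent_Series"
begin

(* The delay variable D, as an element of the field of formal Laurent series over F_q,
   which contains F_q(D) (rational functions) and the power series F_q[[D]]. *)
abbreviation delayD :: "'a::field fls" where "delayD \<equiv> fls_X"

definition is_rational_fn :: "'a::field fls \<Rightarrow> bool" where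
  "is_rational_fn f \<longleftrightarrow> (\<exists>p q. q \<noteq> 0 \<and>
      f = fps_to_fls (fps_of_poly p) / fps_to_fls (fps_of_poly q))"

(* ADT network on a finite set of ports (type 'p).
   node e = supernode owning port e; is_in e = e is an input port (else an output port);
   E = set of links, each going from an output port to an input port of another supernode. *)
definition adt_network :: "('p \<times> 'p) set \<Rightarrow> ('p \<Rightarrow> 'v) \<Rightarrow> ('p \<Rightarrow> bool) \<Rightarrow> bool" where
  "adt_network E node is_in \<longleftrightarrow>
     (\<forall>(e, e') \<in> E. \<not> is_in e \<and> is_in e' \<and> node e \<noteq> node e')"

definition adj_matrix :: "('p \<times> 'p) set \<Rightarrow> ('p \<Rightarrow> 'v) \<Rightarrow> ('p \<Rightarrow> bool)
    \<Rightarrow> ('p \<Rightarrow> 'p \<Rightarrow> 'a::field) \<Rightarrow> 'a fls ^'p^'p" where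
  "adj_matrix E node is_in \<beta> = (\<chi> i j.
     if (i, j) \<in> E then 1
     else if is_in i \<and> \<not> is_in j \<and> node i = node j then fls_const (\<beta> i j)
     else 0)"

definition mat_scale :: "'a::times \<Rightarrow> 'a^'n^'m \<Rightarrow> 'a^'n^'m" where
  "mat_scale c M = (\<chi> i j. c * M $ i $ j)"

definition system_matrix :: "'a::field fls ^'p^'i \<Rightarrow> 'a fls ^'p^'p \<Rightarrow> 'a fls ^'p^'k
    \<Rightarrow> 'a fls ^'k^'i" where
  "system_matrix A F B = A ** matrix_inv (mat 1 - mat_scale delayD F) ** transpose B"

end

theory Submission
  imports Defs
begin


lemma kernel_zero:
  fixes v :: "'a::field fls ^'p::finite" and c :: "'p \<Rightarrow> 'p \<Rightarrow> 'a"
  assumes h: "\<And>e. v$e = fls_X * (\<Sum>e'\<in>UNIV. fls_const (c e' e) * v$e')"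
  shows "v = 0"
proof (rule ccontr)
  assume "v \<noteq> 0"
  then obtain e1 where e1: "v$e1 \<noteq> 0" by (metis vec_eq_iff zero_index)
  define S where "S = {fls_subdegree (v$e) | e. v$e \<noteq> 0}"
  have fin: "finite S" unfolding S_def by simp
  have ne: "S \<noteq> {}" using e1 S_def by auto
  define N where "N = Min S"
  obtain e0 where e0: "v$e0 \<noteq> 0" "fls_subdegree (v$e0) = N"
    using Min_in[OF fin ne] unfolding N_def S_def by auto
  have low: "fls_nth (v$e') (N-1) = 0" for e'
  proof (cases "v$e' = 0")
    case False
    then have "N \<le> fls_subdegree (v$e')" unfolding N_def S_def using fin by (auto intro: Min_le)
    then show ?thesis by simp
  qed simp
  have "fls_nth (v$e0) N = fls_nth (\<Sum>e'\<in>UNIV. fls_const (c e' e0) * v$e') (N-1)"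
    by (subst h) (simp add: fls_X_times_conv_shift)
  also have "\<dots> = 0" by (simp add: fls_nth_sum low)
  finally show False using e0 by (metis nth_fls_subdegree_nonzero)
qed


lemma inv_props:
  fixes M :: "'a::field ^'n::finite^'n"
  assumes "invertible M"
  shows "M ** matrix_inv M = mat 1 \<and> matrix_inv M ** M = mat 1"
  using assms unfolding matrix_inv_def invertible_def by (rule someI_ex)

lemma IDF_invertible:
  fixes c :: "'p::finite \<Rightarrow> 'p \<Rightarrow> 'a::field"
  shows "invertible (mat 1 - mat_scale (fls_X::'a fls) (\<chi> i j. fls_const (c i j)))"
    (is "invertible ?M")
proof -
  have inj: "inj ((*v) (transpose ?M))"
  proof (rule injI)
    fix u w assume uw: "transpose ?M *v u = transpose ?M *v w"
    define v where "v = u - w"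
    have uw': "u v* ?M = w v* ?M" using uw by simp
    have z: "v v* ?M = 0" unfolding v_def
      using uw' by (simp add: vec_eq_iff vector_matrix_mult_def left_diff_distrib sum_subtractf)
    have "v$e = fls_X * (\<Sum>e'\<in>UNIV. fls_const (c e' e) * v$e')" for e
    proof -
      have "0 = (v v* ?M)$e" using z by simp
      also have "\<dots> = (\<Sum>e'\<in>UNIV. v$e' * ((mat 1 :: 'a fls^'p^'p)$e'$e - fls_X * fls_const (c e' e)))"
        by (simp add: vector_matrix_mult_def mat_scale_def)
      also have "\<dots> = (\<Sum>e'\<in>UNIV. v$e' * (mat 1 :: 'a fls^'p^'p)$e'$e) - fls_X * (\<Sum>e'\<in>UNIV. fls_const (c e' e) * v$e')"
        by (simp add: right_diff_distrib sum_subtractf sum_distrib_left mult_ac)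
      also have "(\<Sum>e'\<in>UNIV. v$e' * (mat 1 :: 'a fls^'p^'p)$e'$e) = v$e"
        by (simp add: mat_def if_distrib cong: if_cong)
      finally show ?thesis by (simp add: eq_commute[of 0] )
    qed
    then have "v = 0" by (rule kernel_zero)
    then show "u = w" unfolding v_def by simp
  qed
  have "det (matrix ((*v) (transpose ?M))) \<noteq> 0"
    using det_nz_iff_inj_gen[OF matrix_vector_mul_linear_gen] inj by blast
  then have "det ?M \<noteq> 0" by (simp add: matrix_of_matrix_vector_mul)
  then show ?thesis by (simp add: invertible_det_nz)
qed


theorem theorem11:
  fixes E :: "('p::finite \<times> 'p) set"
    and node :: "'p \<Rightarrow> 'v"
    and is_in :: "'p \<Rightarrow> bool"
    and \<beta> :: "'p \<Rightarrow> 'p \<Rightarrow> 'a::{field, finite}"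
    and S :: 'v
    and T :: "'k::finite \<Rightarrow> 'v"
    and A :: "'a fls ^'p^'i::finite"
    and B :: "'a fls ^'p^'k"
    and X :: "'i \<Rightarrow> 'a fps"
    and Y :: "'p \<Rightarrow> 'a fps"
    and Z :: "'k \<Rightarrow> 'a fps"
  assumes net: "adt_network E node is_in"
    and A_supp: "\<And>i e. \<not> (\<not> is_in e \<and> node e = S) \<Longrightarrow> A $ i $ e = 0"
    and B_supp: "\<And>k e. \<not> (is_in e \<and> node e = T k) \<Longrightarrow> B $ k $ e = 0"
    and A_rat: "\<And>i e. is_rational_fn (A $ i $ e)"
    and B_rat: "\<And>k e. is_rational_fn (B $ k $ e)"
    and dynY: "\<And>e. fps_to_fls (Y e) =
        delayD * (\<Sum>e'\<in>UNIV. adj_matrix E node is_in \<beta> $ e' $ e * fps_to_fls (Y e'))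
        + (\<Sum>i\<in>UNIV. A $ i $ e * fps_to_fls (X i))"
    and dynZ: "\<And>k. fps_to_fls (Z k) = (\<Sum>e\<in>UNIV. B $ k $ e * fps_to_fls (Y e))"
  shows "(\<chi> k. fps_to_fls (Z k)) =
         (\<chi> i. fps_to_fls (X i)) v* system_matrix A (adj_matrix E node is_in \<beta>) B"
  proof -
  let ?F = "adj_matrix E node is_in \<beta>"
  define c where "c i j = (if (i, j) \<in> E then 1
     else if is_in i \<and> \<not> is_in j \<and> node i = node j then \<beta> i j else 0)" for i j
  have Fc: "?F = (\<chi> i j. fls_const (c i j))"
    unfolding adj_matrix_def c_def by (simp add: vec_eq_iff)
  define M where "M = mat 1 - mat_scale (delayD::'a fls) ?F"
  have inv: "invertible M" unfolding M_def Fc by (rule IDF_invertible)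
  note MI = inv_props[OF inv]
  define y where "y = (\<chi> e. fps_to_fls (Y e))"
  define x where "x = (\<chi> i. fps_to_fls (X i))"
  have yM: "y v* M = x v* A"
  proof (subst vec_eq_iff, rule allI)
    fix e
    have "(y v* M)$e = (\<Sum>e'\<in>UNIV. y$e' * (mat 1 :: 'a fls^'p^'p)$e'$e) - delayD * (\<Sum>e'\<in>UNIV. ?F $ e' $ e * y$e')"
      unfolding M_def
      by (simp add: vector_matrix_mult_def mat_scale_def right_diff_distrib sum_subtractf sum_distrib_left mult_ac)
    also have "(\<Sum>e'\<in>UNIV. y$e' * (mat 1 :: 'a fls^'p^'p)$e'$e) = y$e"
      by (simp add: mat_def if_distrib cong: if_cong)
    also have "y$e = delayD * (\<Sum>e'\<in>UNIV. ?F $ e' $ e * y$e') + (x v* A)$e"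
      unfolding y_def x_def using dynY[of e] by (simp add: vector_matrix_mult_def mult_ac)
    finally show "(y v* M)$e = (x v* A)$e" by simp
  qed
  have y: "y = (x v* A) v* matrix_inv M"
    by (metis MI yM vector_matrix_mul_assoc vector_matrix_mul_rid)
  have z: "(\<chi> k. fps_to_fls (Z k)) = y v* transpose B"
    unfolding y_def using dynZ by (simp add: vec_eq_iff vector_matrix_mult_def transpose_def mult_ac)
  show ?thesis
    unfolding z y system_matrix_def M_def[symmetric] x_def[symmetric]
    by (simp only: vector_matrix_mul_assoc)
qed

end
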